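(* Let $v\equiv 4\pmod 6$. If a $(v,3,2)$-BIBD $(X,\mathcal{A})$ has a strong nesting $\phi:\mathcal{A}\to Y$ with $X\subseteq Y$ and $|Y|=w$, then $w\ge 3v/2+1$.
   Context: A $(v,k,\lambda)$-BIBD is a pair $(X,\mathcal{A})$ where $X$ is a set of $v$ points and $\mathcal{A}$ is a multiset of $k$-subsets of $X$ (blocks) such that every pair of distinct points lies in exactly $\lambda$ blocks. Given a $(v,k,\lambda)$-BIBD $(X,\mathcal{A})$ and a set $Y\supseteq X$ with $|Y|=w$, a map $\phi:\mathcal{A}\to Y$ is a strong nesting if (1) $\phi(A)\notin A$ for every block $A\in\mathcal{A}$, and (2) the multiset of pairs $\{\{x,\phi(A)\}: A\in\mathcal{A},\ x\in A\}$ (one pair for each block $A$, counted with multiplicity in $\mathcal{A}$, and each $x\in A$) consists of distinct pairs. *)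

theory Defs
  imports Complex_Main
begin

text \<open>A (v,k,lambda)-BIBD on point set X whose blocks are indexed by a finite set I
  (so repeated blocks are allowed, i.e. the block collection is a multiset).\<close>
definition is_bibd :: "'a set \<Rightarrow> 'i set \<Rightarrow> ('i \<Rightarrow> 'a set) \<Rightarrow> nat \<Rightarrow> nat \<Rightarrow> nat \<Rightarrow> bool" where
  "is_bibd X I B v k lam \<longleftrightarrow>
     finite X \<and> card X = v \<and> finite I \<and>
     (\<forall>i\<in>I. B i \<subseteq> X \<and> card (B i) = k) \<and>
     (\<forall>x\<in>X. \<forall>y\<in>X. x \<noteq> y \<longrightarrow> card {i\<in>I. x \<in> B i \<and> y \<in> B i} = lam)"

definition strong_nesting :: "'i set \<Rightarrow> ('i \<Rightarrow> 'a set) \<Rightarrow> 'a set \<Rightarrow> ('i \<Rightarrow> 'a) \<Rightarrow> bool" where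
  "strong_nesting I B Y phi \<longleftrightarrow>
     (\<forall>i\<in>I. phi i \<in> Y \<and> phi i \<notin> B i) \<and>
     inj_on (\<lambda>(i, x). {x, phi i}) (SIGMA i:I. B i)"

end

theory Submission
  imports Defs
begin

lemma card_ind: "finite T \<Longrightarrow> card {i\<in>T. P i} = (\<Sum>i\<in>T. if P i then 1 else 0)"
  by (simp add: sum.If_cases Int_def)
lemma dc_swap:
  assumes "finite S" "finite T"
  shows "(\<Sum>x\<in>S. card {i\<in>T. P x i}) = (\<Sum>i\<in>T. card {x\<in>S. P x i})"
proof -
  have "(\<Sum>x\<in>S. card {i\<in>T. P x i}) = (\<Sum>x\<in>S. \<Sum>i\<in>T. if P x i then 1 else 0)"
    using assms by (simp add: card_ind)
  also have "\<dots> = (\<Sum>i\<in>T. \<Sum>x\<in>S. if P x i then 1 else 0)" by (rule sum.swap)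
  also have "\<dots> = (\<Sum>i\<in>T. card {x\<in>S. P x i})"
    using assms by (simp add: card_ind)
  finally show ?thesis .
qed

theorem lemma4p4:
  fixes X Y :: "'a set" and I :: "'i set" and B :: "'i \<Rightarrow> 'a set" and phi :: "'i \<Rightarrow> 'a"
    and v w :: nat
  assumes "v mod 6 = 4"
    and "is_bibd X I B v 3 2"
    and "X \<subseteq> Y" and "finite Y" and "card Y = w"
    and "strong_nesting I B Y phi"
  shows "real w \<ge> 3 * real v / 2 + 1"
proof -
  note bd = assms(2)[unfolded is_bibd_def]
  have fX: "finite X" and cX: "card X = v" and fI: "finite I"
    and Bsub: "\<And>i. i \<in> I \<Longrightarrow> B i \<subseteq> X" and Bc: "\<And>i. i \<in> I \<Longrightarrow> card (B i) = 3"
    and lam: "\<And>x y. x \<in> X \<Longrightarrow> y \<in> X \<Longrightarrow> x \<noteq> y \<Longrightarrow> card {i\<in>I. x \<in> B i \<and> y \<in> B i} = 2"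
    using bd by auto
  have fB: "\<And>i. i \<in> I \<Longrightarrow> finite (B i)" using Bsub fX finite_subset by blast
  note sn = assms(6)[unfolded strong_nesting_def]
  have phiY: "\<And>i. i \<in> I \<Longrightarrow> phi i \<in> Y" and phiB: "\<And>i. i \<in> I \<Longrightarrow> phi i \<notin> B i"
    and inj: "inj_on (\<lambda>(i, x). {x, phi i}) (SIGMA i:I. B i)" using sn by auto
  define k where "k = card (Y - X)"
  have wk: "w = v + k" unfolding k_def using assms(3,4,5) cX fX card_mono[OF assms(4) assms(3)]
    by (simp add: card_Diff_subset)
  define n where "n y = card {i\<in>I. phi i = y}" for y
  define M where "M y = {i\<in>I. y \<in> B i \<and> phi i \<in> X}" for y
  define Ou where "Ou y = {i\<in>I. y \<in> B i \<and> phi i \<notin> X}" for y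
  define r where "r y = card {i\<in>I. y \<in> B i}" for y
  have rv: "r y = v - 1" if yX: "y \<in> X" for y
  proof -
    have "(\<Sum>x\<in>X-{y}. card {i\<in>I. x \<in> B i \<and> y \<in> B i}) = (\<Sum>x\<in>X-{y}. 2)"
      using lam yX by (intro sum.cong) auto
    also have "\<dots> = 2 * (v - 1)" using cX fX yX by simp
    finally have 1: "(\<Sum>x\<in>X-{y}. card {i\<in>I. x \<in> B i \<and> y \<in> B i}) = 2 * (v - 1)" .
    have "(\<Sum>x\<in>X-{y}. card {i\<in>I. x \<in> B i \<and> y \<in> B i})
       = (\<Sum>i\<in>I. card {x\<in>X-{y}. x \<in> B i \<and> y \<in> B i})"
      using fX by (intro dc_swap fI) auto
    also have "\<dots> = (\<Sum>i\<in>I. if y \<in> B i then 2 else 0)"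
    proof (intro sum.cong refl)
      fix i assume iI: "i \<in> I"
      show "card {x\<in>X-{y}. x \<in> B i \<and> y \<in> B i} = (if y \<in> B i then 2 else 0)"
      proof (cases "y \<in> B i")
        case True
        then have "{x\<in>X-{y}. x \<in> B i \<and> y \<in> B i} = B i - {y}" using Bsub[OF iI] by auto
        then show ?thesis using True Bc[OF iI] fB[OF iI] by simp
      qed simp
    qed
    also have "\<dots> = 2 * r y" unfolding r_def using fI
      by (simp add: sum.If_cases Int_def)
    finally show ?thesis using 1 by simp
  qed
  have b3: "3 * card I = v * (v - 1)"
  proof -
    have "3 * card I = (\<Sum>i\<in>I. card {y\<in>X. y \<in> B i})"
    proof -
      have "(\<Sum>i\<in>I. card {y\<in>X. y \<in> B i}) = (\<Sum>i\<in>I. 3)"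
      proof (intro sum.cong refl)
        fix i assume iI: "i \<in> I"
        have "{y\<in>X. y \<in> B i} = B i" using Bsub[OF iI] by auto
        then show "card {y\<in>X. y \<in> B i} = 3" using Bc[OF iI] by simp
      qed
      then show ?thesis by simp
    qed
    also have "\<dots> = (\<Sum>y\<in>X. r y)" unfolding r_def using dc_swap[OF fX fI, of "\<lambda>y i. y \<in> B i"] by simp
    also have "\<dots> = (\<Sum>y\<in>X. v - 1)" using rv by simp
    also have "\<dots> = v * (v - 1)" using cX by simp
    finally show ?thesis .
  qed
  have MO: "card (M y) + card (Ou y) = v - 1" if "y \<in> X" for y
  proof -
    have "M y \<union> Ou y = {i\<in>I. y \<in> B i}" "M y \<inter> Ou y = {}" unfolding M_def Ou_def by auto
    then have "card (M y) + card (Ou y) = r y" unfolding r_def using fI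
      by (metis (no_types, lifting) card_Un_disjoint finite_Un finite_subset mem_Collect_eq subsetI)
    then show ?thesis using rv that by simp
  qed
  have Ok: "card (Ou y) \<le> k" if "y \<in> X" for y
  proof -
    have "inj_on phi (Ou y)"
    proof
      fix i j assume "i \<in> Ou y" "j \<in> Ou y" "phi i = phi j"
      then have "(i, y) \<in> (SIGMA i:I. B i)" "(j, y) \<in> (SIGMA i:I. B i)"
        "(\<lambda>(i, x). {x, phi i}) (i, y) = (\<lambda>(i, x). {x, phi i}) (j, y)" unfolding Ou_def by auto
      then show "i = j" using inj_onD[OF inj] by blast
    qed
    moreover have "phi ` Ou y \<subseteq> Y - X" unfolding Ou_def using phiY by auto
    ultimately show ?thesis unfolding k_def
      using assms(4) by (intro card_inj_on_le) auto
  qed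
  have key: "3 * n y + card (M y) \<le> card (X - {y})" for y
  proof -
    let ?f = "\<lambda>(i, x). {x, phi i}"
    define S1 where "S1 = (SIGMA i:{i\<in>I. phi i = y}. B i)"
    define S2 where "S2 = (\<lambda>i. (i, y)) ` M y"
    have fS1: "finite S1" unfolding S1_def using fI fB by auto
    have fS2: "finite S2" unfolding S2_def M_def using fI by auto
    have c1: "card S1 = 3 * n y" unfolding S1_def n_def using fI fB Bc
      by (subst card_SigmaI) auto
    have c2: "card S2 = card (M y)" unfolding S2_def by (simp add: card_image inj_on_def)
    have dj: "S1 \<inter> S2 = {}" unfolding S1_def S2_def M_def using phiB by auto
    have sub: "S1 \<union> S2 \<subseteq> (SIGMA i:I. B i)" unfolding S1_def S2_def M_def by auto
    have img: "?f ` (S1 \<union> S2) \<subseteq> (\<lambda>x. {x, y}) ` (X - {y})"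
    proof
      fix s assume "s \<in> ?f ` (S1 \<union> S2)"
      then obtain i x where ix: "(i, x) \<in> S1 \<union> S2" "s = {x, phi i}" by auto
      show "s \<in> (\<lambda>x. {x, y}) ` (X - {y})"
      proof (cases "(i, x) \<in> S1")
        case True
        then have "i \<in> I" "phi i = y" "x \<in> B i" unfolding S1_def by auto
        then have "x \<in> X - {y}" using Bsub phiB by auto
        then show ?thesis using ix \<open>phi i = y\<close> by blast
      next
        case False
        then have "(i, x) \<in> S2" using ix by auto
        then have "i \<in> I" "x = y" "y \<in> B i" "phi i \<in> X" unfolding S2_def M_def by auto
        then have "phi i \<in> X - {y}" using phiB by auto
        then show ?thesis using ix \<open>x = y\<close> by (auto simp: insert_commute)
      qed
    qed
    have "card (S1 \<union> S2) = card (?f ` (S1 \<union> S2))"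
      using inj_on_subset[OF inj sub] by (simp add: card_image)
    also have "\<dots> \<le> card ((\<lambda>x. {x, y}) ` (X - {y}))"
      using img fX by (intro card_mono) auto
    also have "\<dots> \<le> card (X - {y})" using fX card_image_le by blast
    finally show ?thesis using c1 c2 dj fS1 fS2 by (simp add: card_Un_disjoint)
  qed
  have A1: "3 * n y \<le> k" if "y \<in> X" for y
    using key[of y] MO[OF that] Ok[OF that] cX that fX by simp
  have A2: "3 * n z \<le> v - 1" if "z \<in> Y - X" for z
  proof -
    have "3 * n z \<le> v" using key[of z] that cX by simp
    moreover have "3 * n z \<noteq> v" using assms(1) by presburger
    ultimately show ?thesis by simp
  qed
  have C: "(\<Sum>y\<in>X. n y) + (\<Sum>z\<in>Y-X. n z) = card I"
  proof -
    have "(\<Sum>y\<in>X. n y) + (\<Sum>z\<in>Y-X. n z) = (\<Sum>y\<in>Y. n y)"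
      using assms(3,4) sum.subset_diff[of X Y n] by simp
    also have "\<dots> = (\<Sum>i\<in>I. card {y\<in>Y. phi i = y})" unfolding n_def
      using dc_swap[OF assms(4) fI, of "\<lambda>y i. phi i = y"] by simp
    also have "\<dots> = (\<Sum>i\<in>I. 1)"
    proof (intro sum.cong refl)
      fix i assume "i \<in> I"
      then have "{y\<in>Y. phi i = y} = {phi i}" using phiY by auto
      then show "card {y\<in>Y. phi i = y} = 1" by simp
    qed
    finally show ?thesis by simp
  qed
  have D: "(\<Sum>y\<in>X. card (Ou y)) = 3 * (\<Sum>z\<in>Y-X. n z)"
  proof -
    have "(\<Sum>y\<in>X. card (Ou y)) = (\<Sum>i\<in>I. card {y\<in>X. y \<in> B i \<and> phi i \<notin> X})"
      unfolding Ou_def using dc_swap[OF fX fI, of "\<lambda>y i. y \<in> B i \<and> phi i \<notin> X"] by simp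
    also have "\<dots> = (\<Sum>i\<in>I. 3 * card {z\<in>Y-X. phi i = z})"
    proof (intro sum.cong refl)
      fix i assume iI: "i \<in> I"
      show "card {y\<in>X. y \<in> B i \<and> phi i \<notin> X} = 3 * card {z\<in>Y-X. phi i = z}"
      proof (cases "phi i \<in> X")
        case False
        then have "{y\<in>X. y \<in> B i \<and> phi i \<notin> X} = B i" "{z\<in>Y-X. phi i = z} = {phi i}"
          using Bsub[OF iI] phiY[OF iI] by auto
        then show ?thesis using Bc[OF iI] by simp
      qed simp
    qed
    also have "\<dots> = 3 * (\<Sum>z\<in>Y-X. n z)" unfolding n_def
      using dc_swap[OF _ fI, of "Y - X" "\<lambda>z i. phi i = z"] assms(4)
      by (simp add: sum_distrib_left)
    finally show ?thesis .
  qed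
  define a where "a = (\<Sum>y\<in>X. n y)"
  define c where "c = (\<Sum>z\<in>Y-X. n z)"
  have "3 * a \<le> (\<Sum>y\<in>X. card (Ou y))" unfolding a_def sum_distrib_left
  proof (rule sum_mono)
    fix y assume yX: "y \<in> X"
    show "3 * n y \<le> card (Ou y)" using key[of y] MO[OF yX] cX yX fX by simp
  qed
  then have i1: "3 * a \<le> 3 * c" using D c_def by simp
  have i2: "3 * c \<le> k * (v - 1)" unfolding c_def sum_distrib_left
    using sum_mono[of "Y - X" "\<lambda>z. 3 * n z" "\<lambda>_. v - 1"] A2 k_def by simp
  have tot: "3 * a + 3 * c = v * (v - 1)" using C b3 a_def c_def by simp
  have v4: "v \<ge> 4" using assms(1) by presburger
  have vk: "v \<le> 2 * k"
  proof -
    have "v * (v - 1) \<le> 2 * (k * (v - 1))" using i1 i2 tot by linarith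
    then have "v * (v - 1) \<le> (2 * k) * (v - 1)" by (simp add: mult.assoc)
    then show ?thesis using v4 by simp
  qed
  have "v \<noteq> 2 * k"
  proof
    assume e: "v = 2 * k"
    obtain q where q: "v = 6 * q + 4" using assms(1) by (metis mod_div_mult_eq add.commute mult.commute)
    then have kq: "k = 3 * q + 2" using e by simp
    have "3 * n y \<le> 3 * q" if "y \<in> X" for y using A1[OF that] kq by simp
    then have "3 * a \<le> v * (3 * q)" unfolding a_def sum_distrib_left using cX
      using sum_mono[of X "\<lambda>y. 3 * n y" "\<lambda>_. 3 * q"] by simp
    then have "v * (v - 1) \<le> v * (3 * q) + k * (v - 1)" using i2 tot by simp
    moreover have vm1: "v - 1 = 6*q+3" using q by simp
    ultimately have "v * (6*q+3) \<le> v * (3 * q) + k * (6*q+3)" by simp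
    then have "(6*q+4) * (6*q+3) \<le> (6*q+4) * (3 * q) + (3*q+2) * (6*q+3)"
      unfolding q kq .
    then show False by (simp add: algebra_simps)
  qed
  then have "v + 2 \<le> 2 * k" using vk assms(1) by presburger
  then show ?thesis using wk by simp
qed

end
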